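(* Let $\nu:\mathcal{P}(\mathbf{N})\to\mathbf{R}$ be a normalized capacity and let $\mathcal{I}$ be an ideal on $\mathbf{N}$. The following are equivalent: (i) $\nu$ is $\mathcal{I}$-invariant; (ii) there exists a normalized capacity $\rho:\mathscr{B}(\mathrm{Ult}(\mathcal{I}))\to\mathbf{R}$ such that for every $x\in\ell_\infty$, $$\int_{\mathbf{N}} x\,\mathrm{d}\nu=\int_{\mathrm{Ult}(\mathcal{I})}\Big(\int_{\mathbf{N}} x\,\mathrm{d}\mu_{\mathcal{F}}\Big)\,\mathrm{d}\rho(\mathcal{F});$$ (iii) there exists a normalized capacity $\rho:\mathscr{B}(\mathrm{Ult}(\mathcal{I}))\to\mathbf{R}$ such that for every $A\subseteq\mathbf{N}$, $$\nu(A)=\int_{\mathrm{Ult}(\mathcal{I})}\mu_{\mathcal{F}}(A)\,\mathrm{d}\rho(\mathcal{F}).$$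
   Context: $\mathbf{N}$ is the set of positive integers. Given a measurable space $(S,\Sigma)$, a normalized capacity $\nu:\Sigma\to\mathbf{R}$ is a set function with $\nu(A)\le\nu(B)$ whenever $A\subseteq B$, $\nu(\emptyset)=0$, $\nu(S)=1$. An ideal on $\mathbf{N}$ is a family $\mathcal{I}\subseteq\mathcal{P}(\mathbf{N})$ closed under subsets and finite unions, with $\mathbf{N}\notin\mathcal{I}$, and (standing assumption) containing all finite subsets of $\mathbf{N}$. Its dual filter is $\mathcal{I}^\star=\{A\subseteq\mathbf{N}:\mathbf{N}\setminus A\in\mathcal{I}\}$. A normalized capacity $\nu$ on $\mathcal{P}(\mathbf{N})$ is $\mathcal{I}$-invariant if $\nu(A)=\nu(B)$ whenever the symmetric difference $A\triangle B\in\mathcal{I}$. $\beta\mathbf{N}$ denotes the space of ultrafilters on $\mathbf{N}$ with the topology generated by the clopen basis $\{\{\mathcal{F}\in\beta\mathbf{N}:A\in\mathcal{F}\}:A\subseteq\mathbf{N}\}$; $\mathrm{Ult}(\mathcal{I})=\{\mathcal{F}\in\beta\mathbf{N}:\mathcal{I}^\star\subseteq\mathcal{F}\}$ with the relative topology, and $\mathscr{B}(\cdot)$ denotes the Borel $\sigma$-algebra. For $\mathcal{F}\in\mathrm{Ult}(\mathcal{I})$, $\mu_{\mathcal{F}}:\mathcal{P}(\mathbf{N})\to\{0,1\}$ is given by $\mu_{\mathcal{F}}(A)=1$ iff $A\in\mathcal{F}$. $\ell_\infty$ is the space of bounded real sequences. For a bounded function $x$ on $S$ and a normalized capacity $\nu$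 (defined at least on the upper level sets of $x$), the Choquet integral is $\int_S x\,\mathrm{d}\nu=\int_0^\infty\nu(x\ge t)\,\mathrm{d}t+\int_{-\infty}^0[\nu(x\ge t)-\nu(S)]\,\mathrm{d}t$ (improper Riemann integrals). *)

theory Defs
  imports "HOL-Analysis.Analysis"
begin

text \<open>The positive integers N are modelled by the type nat (a relabelling n to n+1).\<close>

definition is_ideal :: "nat set set \<Rightarrow> bool" where
  "is_ideal I \<longleftrightarrow>
     (\<forall>A B. A \<in> I \<and> B \<subseteq> A \<longrightarrow> B \<in> I) \<and>
     (\<forall>A B. A \<in> I \<and> B \<in> I \<longrightarrow> A \<union> B \<in> I) \<and>
     UNIV \<notin> I \<and>
     (\<forall>A. finite A \<longrightarrow> A \<in> I)"

definition dual_filter :: "nat set set \<Rightarrow> nat set set" where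
  "dual_filter I = {A. UNIV - A \<in> I}"

definition is_ultrafilter :: "nat set set \<Rightarrow> bool" where
  "is_ultrafilter F \<longleftrightarrow>
     UNIV \<in> F \<and> {} \<notin> F \<and>
     (\<forall>A B. A \<in> F \<and> A \<subseteq> B \<longrightarrow> B \<in> F) \<and>
     (\<forall>A B. A \<in> F \<and> B \<in> F \<longrightarrow> A \<inter> B \<in> F) \<and>
     (\<forall>A. A \<in> F \<or> UNIV - A \<in> F)"

text \<open>Stone-Cech compactification beta N with its clopen-basis topology.\<close>
definition betaN_topology :: "nat set set topology" where
  "betaN_topology =
     topology_generated_by {{F. is_ultrafilter F \<and> A \<in> F} | A. True}"

definition Ult :: "nat set set \<Rightarrow> nat set set set" where
  "Ult I = {F. is_ultrafilter F \<and> dual_filter I \<subseteq> F}"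

definition Ult_borel :: "nat set set \<Rightarrow> nat set set set set" where
  "Ult_borel I =
     sigma_sets (topspace (subtopology betaN_topology (Ult I)))
                {U. openin (subtopology betaN_topology (Ult I)) U}"

definition normalized_capacity :: "'a set \<Rightarrow> 'a set set \<Rightarrow> ('a set \<Rightarrow> real) \<Rightarrow> bool" where
  "normalized_capacity S \<Sigma> \<nu> \<longleftrightarrow>
     (\<forall>A\<in>\<Sigma>. \<forall>B\<in>\<Sigma>. A \<subseteq> B \<longrightarrow> \<nu> A \<le> \<nu> B) \<and> \<nu> {} = 0 \<and> \<nu> S = 1"

definition invariant :: "nat set set \<Rightarrow> (nat set \<Rightarrow> real) \<Rightarrow> bool" where
  "invariant I \<nu> \<longleftrightarrow> (\<forall>A B. (A - B) \<union> (B - A) \<in> I \<longrightarrow> \<nu> A = \<nu> B)"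

definition mu_uf :: "nat set set \<Rightarrow> nat set \<Rightarrow> real" where
  "mu_uf F A = (if A \<in> F then 1 else 0)"

text \<open>Choquet integral of x over S w.r.t. nu; the improper Riemann integrals
  are rendered as (Henstock-Kurzweil) integrals over the half-lines.\<close>
definition choquet :: "'a set \<Rightarrow> ('a set \<Rightarrow> real) \<Rightarrow> ('a \<Rightarrow> real) \<Rightarrow> real" where
  "choquet S \<nu> x =
     integral {0..} (\<lambda>t. \<nu> {s\<in>S. x s \<ge> t}) +
     integral {..0} (\<lambda>t. \<nu> {s\<in>S. x s \<ge> t} - \<nu> S)"

end

theory Submission
  imports Defs
begin


lemma int_const_interval:
  fixes a b c :: real assumes "a \<le> b" "{a..b} \<subseteq> T"
  shows "integral T (\<lambda>t. if t \<in> {a..b} then c else 0) = (b - a) * c"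
proof -
  have "((\<lambda>t. c) has_integral (b - a) * c) {a..b}"
    using has_integral_const_real[of c a b] assms by simp
  then have "((\<lambda>t. if t \<in> {a..b} then c else 0) has_integral (b - a) * c) T"
    by (rule has_integral_restrict[OF assms(2), of "\<lambda>t. c", THEN iffD2])
  then show ?thesis by blast
qed

lemma step_integral:
  fixes f :: "real \<Rightarrow> real"
  assumes lt: "\<And>t. t < L \<Longrightarrow> f t = 1" and gt: "\<And>t. t > L \<Longrightarrow> f t = 0"
  shows "integral {0..} f + integral {..0} (\<lambda>t. f t - 1) = L"
proof (cases "L \<ge> 0")
  case True
  have "integral {0..} f = integral {0..} (\<lambda>t::real. if t \<in> {0..L} then 1 else 0)"
    by (rule integral_spike[where S="{L::real}"]) (auto simp: lt gt)
  also have "\<dots> = L" using int_const_interval[of 0 L "{0..}" 1] True by simp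
  finally have 1: "integral {0..} f = L" .
  have "integral {..0} (\<lambda>t. f t - 1) = integral {..0} (\<lambda>t::real. 0::real)"
    by (rule integral_spike[where S="{L::real}"]) (use True in \<open>auto simp: lt\<close>)
  then show ?thesis using 1 by simp
next
  case False
  have 1: "integral {0..} f = integral {0..} (\<lambda>t::real. 0::real)"
    by (rule integral_cong) (use False in \<open>auto simp: gt\<close>)
  have "integral {..0} (\<lambda>t. f t - 1) = integral {..0} (\<lambda>t. if t \<in> {L..0} then -1 else 0)"
    by (rule integral_spike[where S="{L::real}"]) (use False in \<open>auto simp: lt gt\<close>)
  also have "\<dots> = L" using int_const_interval[of L 0 "{..0}" "-1"] False by simp
  finally show ?thesis using 1 by simp
qed

lemma choquet_01:
  assumes "m S = 1" "m {} = 0" "\<And>s. s \<in> S \<Longrightarrow> h s = 0 \<or> h s = 1"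
  shows "choquet S m h = m {s\<in>S. h s = 1}"
proof -
  let ?c = "m {s\<in>S. h s = 1}"
  have le0: "{s\<in>S. h s \<ge> t} = S" if "t \<le> 0" for t using that assms(3) by force
  have mid: "{s\<in>S. h s \<ge> t} = {s\<in>S. h s = 1}" if "0 < t" "t \<le> 1" for t
    using that assms(3) by force
  have gt1: "{s\<in>S. h s \<ge> t} = {}" if "t > 1" for t using that assms(3) by force
  have "integral {0..} (\<lambda>t. m {s\<in>S. h s \<ge> t}) = integral {0..} (\<lambda>t::real. if t \<in> {0..1} then ?c else 0)"
    by (rule integral_spike[where S="{0::real}"]) (auto simp: mid gt1 assms(2))
  also have "\<dots> = ?c" using int_const_interval[of 0 1 "{0..}" ?c] by simp
  finally have 1: "integral {0..} (\<lambda>t. m {s\<in>S. h s \<ge> t}) = ?c" .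
  have "integral {..0} (\<lambda>t. m {s\<in>S. h s \<ge> t} - m S) = integral {..0} (\<lambda>t::real. 0::real)"
    by (rule integral_cong) (auto simp: le0)
  then show ?thesis using 1 unfolding choquet_def by simp
qed



definition is_pfilter :: "nat set set \<Rightarrow> bool" where
  "is_pfilter F \<longleftrightarrow> UNIV \<in> F \<and> {} \<notin> F \<and>
     (\<forall>A B. A \<in> F \<and> A \<subseteq> B \<longrightarrow> B \<in> F) \<and> (\<forall>A B. A \<in> F \<and> B \<in> F \<longrightarrow> A \<inter> B \<in> F)"

lemma pfI: "UNIV \<in> F \<Longrightarrow> {} \<notin> F \<Longrightarrow> (\<And>A B. A \<in> F \<Longrightarrow> A \<subseteq> B \<Longrightarrow> B \<in> F) \<Longrightarrow>
   (\<And>A B. A \<in> F \<Longrightarrow> B \<in> F \<Longrightarrow> A \<inter> B \<in> F) \<Longrightarrow> is_pfilter F"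
  unfolding is_pfilter_def by blast
lemma pf_univ: "is_pfilter F \<Longrightarrow> UNIV \<in> F" unfolding is_pfilter_def by blast
lemma pf_empty: "is_pfilter F \<Longrightarrow> {} \<notin> F" unfolding is_pfilter_def by blast
lemma pf_up: "is_pfilter F \<Longrightarrow> A \<in> F \<Longrightarrow> A \<subseteq> B \<Longrightarrow> B \<in> F" unfolding is_pfilter_def by blast
lemma pf_int: "is_pfilter F \<Longrightarrow> A \<in> F \<Longrightarrow> B \<in> F \<Longrightarrow> A \<inter> B \<in> F" unfolding is_pfilter_def by blast

lemma ideal_empty: "is_ideal I \<Longrightarrow> {} \<in> I"
  unfolding is_ideal_def by auto

lemma ideal_sub: "is_ideal I \<Longrightarrow> A \<in> I \<Longrightarrow> B \<subseteq> A \<Longrightarrow> B \<in> I"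
  unfolding is_ideal_def by blast

lemma dual_inter: "is_ideal I \<Longrightarrow> D1 \<in> dual_filter I \<Longrightarrow> D2 \<in> dual_filter I \<Longrightarrow> D1 \<inter> D2 \<in> dual_filter I"
proof -
  assume I: "is_ideal I" and d: "D1 \<in> dual_filter I" "D2 \<in> dual_filter I"
  have "(UNIV - D1) \<union> (UNIV - D2) \<in> I" using I d unfolding is_ideal_def dual_filter_def by simp
  moreover have "UNIV - D1 \<inter> D2 = (UNIV - D1) \<union> (UNIV - D2)" by blast
  ultimately show ?thesis unfolding dual_filter_def by simp
qed

lemma ultra_exists:
  assumes I: "is_ideal I" and A: "A \<notin> I"
  shows "\<exists>F\<in>Ult I. A \<in> F"
proof -
  define \<A> where "\<A> = {G. is_pfilter G \<and> dual_filter I \<subseteq> G \<and> A \<in> G}"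
  define G0 where "G0 = {C. \<exists>D\<in>dual_filter I. D \<inter> A \<subseteq> C}"
  have UD: "UNIV \<in> dual_filter I" using ideal_empty[OF I] by (simp add: dual_filter_def)
  have "is_pfilter G0"
  proof (rule pfI)
    show "{} \<notin> G0"
    proof
      assume "{} \<in> G0"
      then obtain D where D: "D \<in> dual_filter I" "D \<inter> A \<subseteq> {}" unfolding G0_def by blast
      then have "A \<subseteq> UNIV - D" by auto
      moreover have "UNIV - D \<in> I" using D by (simp add: dual_filter_def)
      ultimately have "A \<in> I" using ideal_sub[OF I] by blast
      then show False using A by simp
    qed
    show "C1 \<inter> C2 \<in> G0" if "C1 \<in> G0" "C2 \<in> G0" for C1 C2
    proof -
      from that(1) obtain D1 where D1: "D1 \<in> dual_filter I" "D1 \<inter> A \<subseteq> C1"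
        unfolding G0_def by blast
      from that(2) obtain D2 where D2: "D2 \<in> dual_filter I" "D2 \<inter> A \<subseteq> C2"
        unfolding G0_def by blast
      have "D1 \<inter> D2 \<in> dual_filter I" using dual_inter[OF I D1(1) D2(1)] .
      moreover have "D1 \<inter> D2 \<inter> A \<subseteq> C1 \<inter> C2" using D1 D2 by blast
      ultimately show ?thesis unfolding G0_def by blast
    qed
    show "UNIV \<in> G0" unfolding G0_def using UD by blast
    show "C \<in> G0" if "B \<in> G0" "B \<subseteq> C" for B C using that unfolding G0_def by blast
  qed
  moreover have "dual_filter I \<subseteq> G0" unfolding G0_def by blast
  moreover have "A \<in> G0" unfolding G0_def using UD by blast
  ultimately have "G0 \<in> \<A>" unfolding \<A>_def by blast
  then have ne: "\<A> \<noteq> {}" by auto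
  have "\<exists>M\<in>\<A>. \<forall>X\<in>\<A>. M \<subseteq> X \<longrightarrow> X = M"
  proof (rule subset_Zorn_nonempty[OF ne])
    fix \<C> assume Cne: "\<C> \<noteq> {}" and ch: "subset.chain \<A> \<C>"
    have CA: "\<C> \<subseteq> \<A>" and tot: "\<And>X Y. X \<in> \<C> \<Longrightarrow> Y \<in> \<C> \<Longrightarrow> X \<subseteq> Y \<or> Y \<subseteq> X"
      using ch unfolding subset.chain_def by auto
    obtain X0 where X0: "X0 \<in> \<C>" using Cne by auto
    have pf: "is_pfilter X" "dual_filter I \<subseteq> X" "A \<in> X" if "X \<in> \<C>" for X
      using CA that unfolding \<A>_def by auto
    have "is_pfilter (\<Union>\<C>)"
    proof (rule pfI)
      show "UNIV \<in> \<Union>\<C>" using pf_univ[OF pf(1)[OF X0]] X0 by auto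
      show "{} \<notin> \<Union>\<C>" using pf_empty[OF pf(1)] by auto
      show "B \<in> \<Union>\<C>" if h: "A' \<in> \<Union>\<C>" "A' \<subseteq> B" for A' B
      proof -
        obtain X where "X \<in> \<C>" "A' \<in> X" using h by auto
        then show ?thesis using pf_up[OF pf(1)] h(2) by blast
      qed
      show "A' \<inter> B \<in> \<Union>\<C>" if h: "A' \<in> \<Union>\<C>" "B \<in> \<Union>\<C>" for A' B
      proof -
        obtain X Y where XY: "X \<in> \<C>" "Y \<in> \<C>" "A' \<in> X" "B \<in> Y" using h by auto
        show ?thesis
        proof (cases "X \<subseteq> Y")
          case True
          then have "A' \<inter> B \<in> Y" using pf_int[OF pf(1)[OF XY(2)]] XY by blast
          then show ?thesis using XY by blast
        next
          case False then have "Y \<subseteq> X" using tot XY by blast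
          then have "A' \<inter> B \<in> X" using pf_int[OF pf(1)[OF XY(1)]] XY by blast
          then show ?thesis using XY by blast
        qed
      qed
    qed
    moreover have "dual_filter I \<subseteq> \<Union>\<C>" using pf(2)[OF X0] X0 by blast
    moreover have "A \<in> \<Union>\<C>" using pf(3)[OF X0] X0 by blast
    ultimately show "\<Union>\<C> \<in> \<A>" unfolding \<A>_def by blast
  qed
  then obtain M where M: "M \<in> \<A>" and max: "\<And>X. X \<in> \<A> \<Longrightarrow> M \<subseteq> X \<Longrightarrow> X = M" by blast
  have pM: "is_pfilter M" "dual_filter I \<subseteq> M" "A \<in> M" using M unfolding \<A>_def by auto
  have ult: "B \<in> M \<or> UNIV - B \<in> M" for B
  proof (rule ccontr)
    assume nb: "\<not> (B \<in> M \<or> UNIV - B \<in> M)"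
    define M' where "M' = {C. \<exists>D\<in>M. D \<inter> B \<subseteq> C}"
    have "is_pfilter M'"
    proof (rule pfI)
      show "UNIV \<in> M'" unfolding M'_def using pf_univ[OF pM(1)] by blast
      show "{} \<notin> M'"
      proof
        assume "{} \<in> M'"
        then obtain D where "D \<in> M" "D \<inter> B \<subseteq> {}" unfolding M'_def by blast
        then have "D \<subseteq> UNIV - B" by auto
        then have "UNIV - B \<in> M" using \<open>D \<in> M\<close> pf_up[OF pM(1)] by blast
        then show False using nb by simp
      qed
      show "C \<in> M'" if "A' \<in> M'" "A' \<subseteq> C" for A' C using that unfolding M'_def by blast
      show "A' \<inter> C \<in> M'" if "A' \<in> M'" "C \<in> M'" for A' C
      proof -
        from that(1) obtain D1 where D1: "D1 \<in> M" "D1 \<inter> B \<subseteq> A'" unfolding M'_def by blast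
        from that(2) obtain D2 where D2: "D2 \<in> M" "D2 \<inter> B \<subseteq> C" unfolding M'_def by blast
        have "D1 \<inter> D2 \<in> M" using pf_int[OF pM(1) D1(1) D2(1)] .
        moreover have "D1 \<inter> D2 \<inter> B \<subseteq> A' \<inter> C" using D1 D2 by blast
        ultimately show ?thesis unfolding M'_def by blast
      qed
    qed
    moreover have "dual_filter I \<subseteq> M'" using pM(2) unfolding M'_def by blast
    moreover have "A \<in> M'" using pM(3) unfolding M'_def by blast
    ultimately have "M' \<in> \<A>" unfolding \<A>_def by blast
    moreover have "M \<subseteq> M'" unfolding M'_def by blast
    moreover have "B \<in> M'" using pf_univ[OF pM(1)] unfolding M'_def by blast
    ultimately have "B \<in> M" using max by blast
    then show False using nb by simp
  qed
  have "is_ultrafilter M"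
    unfolding is_ultrafilter_def
    using pf_univ[OF pM(1)] pf_empty[OF pM(1)] pf_up[OF pM(1)] pf_int[OF pM(1)] ult
    by (intro conjI allI impI) (simp_all, blast+)
  then have "M \<in> Ult I" using pM(2) unfolding Ult_def by simp
  then show ?thesis using pM(3) by blast
qed



definition hat :: "nat set set \<Rightarrow> nat set \<Rightarrow> nat set set set" where
  "hat I A = {F\<in>Ult I. A \<in> F}"

lemma uf_univ: "is_ultrafilter F \<Longrightarrow> UNIV \<in> F" unfolding is_ultrafilter_def by blast
lemma uf_empty: "is_ultrafilter F \<Longrightarrow> {} \<notin> F" unfolding is_ultrafilter_def by blast
lemma uf_up: "is_ultrafilter F \<Longrightarrow> A \<in> F \<Longrightarrow> A \<subseteq> B \<Longrightarrow> B \<in> F" unfolding is_ultrafilter_def by blast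
lemma uf_int: "is_ultrafilter F \<Longrightarrow> A \<in> F \<Longrightarrow> B \<in> F \<Longrightarrow> A \<inter> B \<in> F" unfolding is_ultrafilter_def by blast
lemma Ult_uf: "F \<in> Ult I \<Longrightarrow> is_ultrafilter F" unfolding Ult_def by blast
lemma Ult_dual: "F \<in> Ult I \<Longrightarrow> D \<in> dual_filter I \<Longrightarrow> D \<in> F" unfolding Ult_def by blast

lemma choquet_cong:
  assumes "\<And>s. s \<in> S \<Longrightarrow> g s = h s"
  shows "choquet S m g = choquet S m h"
proof -
  have "\<And>t. {s\<in>S. g s \<ge> t} = {s\<in>S. h s \<ge> t}" using assms by auto
  then show ?thesis unfolding choquet_def by simp
qed

lemma hat_eq:
  assumes "(A - B) \<union> (B - A) \<in> I"
  shows "hat I A = hat I B"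
proof -
  have "B \<in> F" if "F \<in> Ult I" "A \<in> F" "(A - B) \<union> (B - A) \<in> I" for A B F
  proof -
    have "UNIV - (UNIV - ((A - B) \<union> (B - A))) \<in> I" using that(3) by (simp add: Diff_Diff_Int)
    then have "UNIV - ((A - B) \<union> (B - A)) \<in> F" using Ult_dual[OF that(1)] unfolding dual_filter_def by blast
    then have "A \<inter> (UNIV - ((A - B) \<union> (B - A))) \<in> F" using uf_int[OF Ult_uf[OF that(1)] that(2)] by blast
    then show "B \<in> F" by (rule uf_up[OF Ult_uf[OF that(1)]]) blast
  qed
  moreover have "(B - A) \<union> (A - B) \<in> I" using assms by (simp add: Un_commute)
  ultimately show ?thesis unfolding hat_def using assms by blast
qed

lemma mu_uf_univ: "is_ultrafilter F \<Longrightarrow> mu_uf F UNIV = 1" using uf_univ by (simp add: mu_uf_def)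
lemma mu_uf_empty: "is_ultrafilter F \<Longrightarrow> mu_uf F {} = 0" using uf_empty by (simp add: mu_uf_def)

lemma cap_props:
  assumes "normalized_capacity S \<Sigma> \<rho>"
  shows "\<rho> S = 1" "\<rho> {} = 0"
  using assms unfolding normalized_capacity_def by auto

lemma choquet_mu: 
  assumes "normalized_capacity (Ult I) (Ult_borel I) \<rho>"
  shows "choquet (Ult I) \<rho> (\<lambda>F. mu_uf F A) = \<rho> (hat I A)"
proof -
  have "choquet (Ult I) \<rho> (\<lambda>F. mu_uf F A) = \<rho> {F\<in>Ult I. mu_uf F A = 1}"
    by (rule choquet_01) (use cap_props[OF assms] in \<open>auto simp: mu_uf_def\<close>)
  also have "{F\<in>Ult I. mu_uf F A = 1} = hat I A" by (auto simp: mu_uf_def hat_def)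
  finally show ?thesis .
qed

lemma iii_to_i:
  assumes "normalized_capacity (Ult I) (Ult_borel I) \<rho>"
    and "\<forall>A. \<nu> A = choquet (Ult I) \<rho> (\<lambda>F. mu_uf F A)"
  shows "invariant I \<nu>"
  unfolding invariant_def
proof (intro allI impI)
  fix A B assume "(A - B) \<union> (B - A) \<in> I"
  then have "hat I A = hat I B" by (rule hat_eq)
  then show "\<nu> A = \<nu> B" using assms(2) choquet_mu[OF assms(1)] by simp
qed

lemma choquet_indicator:
  assumes "m UNIV = 1" "m {} = 0"
  shows "choquet UNIV m (indicator A :: nat \<Rightarrow> real) = m A"
proof -
  have "choquet UNIV m (indicator A :: nat \<Rightarrow> real) = m {s\<in>UNIV. (indicator A s :: real) = 1}"
    by (rule choquet_01) (use assms in \<open>auto simp: indicator_def\<close>)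
  also have "{s\<in>UNIV. (indicator A s :: real) = 1} = A" by (auto simp: indicator_def)
  finally show ?thesis .
qed

lemma ii_to_iii:
  assumes nu: "normalized_capacity UNIV UNIV \<nu>"
    and rho: "normalized_capacity (Ult I) (Ult_borel I) \<rho>"
    and ii: "\<forall>x::nat \<Rightarrow> real. bounded (range x) \<longrightarrow>
                 choquet UNIV \<nu> x = choquet (Ult I) \<rho> (\<lambda>F. choquet UNIV (mu_uf F) x)"
  shows "\<forall>A. \<nu> A = choquet (Ult I) \<rho> (\<lambda>F. mu_uf F A)"
proof
  fix A
  have "range (indicator A :: nat \<Rightarrow> real) \<subseteq> {0, 1}" by (auto simp: indicator_def)
  then have "bounded (range (indicator A :: nat \<Rightarrow> real))"
    by (meson bounded_subset finite.emptyI finite_imp_bounded finite_insert)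
  then have "choquet UNIV \<nu> (indicator A) = choquet (Ult I) \<rho> (\<lambda>F. choquet UNIV (mu_uf F) (indicator A))"
    using ii by blast
  also have "\<dots> = choquet (Ult I) \<rho> (\<lambda>F. mu_uf F A)"
    by (rule choquet_cong) (simp add: choquet_indicator mu_uf_univ mu_uf_empty Ult_uf)
  finally show "\<nu> A = choquet (Ult I) \<rho> (\<lambda>F. mu_uf F A)"
    using choquet_indicator cap_props[OF nu] by simp
qed



definition Lx :: "(nat \<Rightarrow> real) \<Rightarrow> nat set set \<Rightarrow> real" where
  "Lx x F = Sup {t. {s. t \<le> x s} \<in> F}"

lemma Lx_props:
  assumes F: "is_ultrafilter F" and M: "\<And>s. \<bar>x s\<bar> \<le> M"
  shows "t < Lx x F \<Longrightarrow> {s. t \<le> x s} \<in> F"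
    and "{s. t \<le> x s} \<in> F \<Longrightarrow> t \<le> Lx x F"
proof -
  let ?T = "{t. {s. t \<le> x s} \<in> F}"
  have "-M \<le> x s" for s using M[of s] by linarith
  then have "{s. -M \<le> x s} = UNIV" by auto
  then have ne: "?T \<noteq> {}" using uf_univ[OF F] by (intro ex_in_conv[THEN iffD1]) (rule exI[of _ "-M"], simp)
  have bdd: "bdd_above ?T"
  proof (rule bdd_aboveI)
    fix t assume "t \<in> ?T"
    show "t \<le> M"
    proof (rule ccontr)
      assume "\<not> t \<le> M"
      then have "x s < t" for s using M[of s] by linarith
      then have "{s. t \<le> x s} = {}" by (auto simp: not_le[symmetric])
      then show False using \<open>t \<in> ?T\<close> uf_empty[OF F] by simp
    qed
  qed
  show "t < Lx x F \<Longrightarrow> {s. t \<le> x s} \<in> F"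
  proof -
    assume "t < Lx x F"
    then obtain t' where "t' \<in> ?T" "t < t'" using less_cSup_iff[OF ne bdd] unfolding Lx_def by blast
    then show ?thesis using uf_up[OF F] by (smt (verit, best) Collect_mono mem_Collect_eq)
  qed
  show "{s. t \<le> x s} \<in> F \<Longrightarrow> t \<le> Lx x F"
    unfolding Lx_def using cSup_upper[OF _ bdd] by simp
qed

lemma choquet_uf:
  assumes F: "is_ultrafilter F" and M: "\<And>s. \<bar>x s\<bar> \<le> M"
  shows "choquet UNIV (mu_uf F) x = Lx x F"
proof -
  have "integral {0..} (\<lambda>t. mu_uf F {s\<in>UNIV. t \<le> x s}) +
        integral {..0} (\<lambda>t. mu_uf F {s\<in>UNIV. t \<le> x s} - 1) = Lx x F"
  proof (rule step_integral)
    fix t assume "t < Lx x F"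
    then show "mu_uf F {s\<in>UNIV. t \<le> x s} = 1" using Lx_props(1)[OF F M] by (simp add: mu_uf_def)
  next
    fix t assume "t > Lx x F"
    then have "{s. t \<le> x s} \<notin> F" using Lx_props(2)[OF F M, where t=t] by (meson not_le)
    then show "mu_uf F {s\<in>UNIV. t \<le> x s} = 0" by (simp add: mu_uf_def)
  qed
  then show ?thesis unfolding choquet_def using mu_uf_univ[OF F] by simp
qed

lemma countable_negligible: "countable (D :: real set) \<Longrightarrow> negligible D"
proof -
  assume "countable D"
  then have "negligible (\<Union> ((\<lambda>x. {x}) ` D))"
    by (intro negligible_countable_Union) auto
  then show ?thesis by simp
qed

lemma spike_eq:
  fixes \<Phi> \<Psi> :: "real \<Rightarrow> real"
  assumes anti: "\<And>a b. a \<le> b \<Longrightarrow> \<Phi> b \<le> \<Phi> a"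
    and lo: "\<And>t. \<Phi> t \<le> \<Psi> t" and hi: "\<And>s t. s < t \<Longrightarrow> \<Psi> t \<le> \<Phi> s"
  shows "\<exists>D. negligible D \<and> (\<forall>t. t \<notin> D \<longrightarrow> \<Psi> t = \<Phi> t)"
proof -
  define D where "D = {t\<in>UNIV. \<not> isCont (\<lambda>t. - \<Phi> t) t}"
  have "mono_on UNIV (\<lambda>t. - \<Phi> t)" by (rule mono_onI) (simp add: anti)
  then have "countable D" unfolding D_def by (intro mono_on_ctble_discont_open) auto
  moreover have "\<Psi> t = \<Phi> t" if "t \<notin> D" for t
  proof -
    have "isCont (\<lambda>t. - \<Phi> t) t" using that unfolding D_def by auto
    then have "isCont (\<lambda>t. - (- \<Phi> t)) t" by (rule isCont_minus)
    then have "isCont \<Phi> t" by simp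
    then have "(\<Phi> \<longlongrightarrow> \<Phi> t) (at t)" by (simp add: isCont_def)
    then have lim: "(\<Phi> \<longlongrightarrow> \<Phi> t) (at_left t)" by (rule tendsto_mono[OF at_le, rotated]) simp
    have "eventually (\<lambda>s. \<Psi> t \<le> \<Phi> s) (at_left t)"
      by (rule eventually_at_leftI[of "t - 1"]) (auto intro: hi)
    then have "\<Psi> t \<le> \<Phi> t" using tendsto_lowerbound[OF lim] by simp
    then show ?thesis using lo[of t] by simp
  qed
  ultimately show ?thesis using countable_negligible by blast
qed

lemma i_to_ii:
  assumes nu: "normalized_capacity UNIV UNIV \<nu>" and I: "is_ideal I" and inv: "invariant I \<nu>"
  shows "\<exists>\<rho>. normalized_capacity (Ult I) (Ult_borel I) \<rho> \<and>
              (\<forall>x::nat \<Rightarrow> real. bounded (range x) \<longrightarrow>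
                 choquet UNIV \<nu> x = choquet (Ult I) \<rho> (\<lambda>F. choquet UNIV (mu_uf F) x))"
proof -
  have numono: "A \<subseteq> B \<Longrightarrow> \<nu> A \<le> \<nu> B" for A B using nu unfolding normalized_capacity_def by blast
  have nu1: "\<nu> UNIV = 1" and nu0: "\<nu> {} = 0" using cap_props[OF nu] by auto
  have nule: "\<nu> A \<le> 1" for A using numono[of A UNIV] nu1 by simp
  have inv': "\<nu> A = \<nu> B" if "(A - B) \<union> (B - A) \<in> I" for A B using inv that unfolding invariant_def by blast
  define S where "S U = {\<nu> A | A. hat I A \<subseteq> U}" for U
  define \<rho> where "\<rho> U = Sup (S U)" for U
  have Sne: "S U \<noteq> {}" for U
  proof -
    have "hat I {} = {}" unfolding hat_def using uf_empty Ult_uf by blast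
    then show ?thesis unfolding S_def by blast
  qed
  have Sbdd: "bdd_above (S U)" for U unfolding S_def by (rule bdd_aboveI[of _ 1]) (auto intro: nule)
  have rho_ge: "\<nu> A \<le> \<rho> U" if "hat I A \<subseteq> U" for A U
    unfolding \<rho>_def by (rule cSup_upper[OF _ Sbdd]) (use that in \<open>auto simp: S_def\<close>)
  have rho_le: "\<rho> U \<le> c" if "\<And>A. hat I A \<subseteq> U \<Longrightarrow> \<nu> A \<le> c" for U c
    unfolding \<rho>_def by (rule cSup_least[OF Sne]) (use that in \<open>auto simp: S_def\<close>)
  have rho_mono: "\<rho> U \<le> \<rho> V" if "U \<subseteq> V" for U V
    by (rule rho_le) (use that rho_ge in blast)
  have rho0: "\<rho> {} = 0"
  proof (rule order.antisym)
    show "\<rho> {} \<le> 0"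
    proof (rule rho_le)
      fix A assume "hat I A \<subseteq> {}"
      then have "A \<in> I" using ultra_exists[OF I, of A] unfolding hat_def by blast
      then have "\<nu> A = \<nu> {}" by (intro inv') simp
      then show "\<nu> A \<le> 0" using nu0 by simp
    qed
    show "0 \<le> \<rho> {}" using rho_ge[of "{}" "{}"] nu0 unfolding hat_def using uf_empty Ult_uf by auto
  qed
  have rho1: "\<rho> (Ult I) = 1"
  proof (rule order.antisym)
    show "\<rho> (Ult I) \<le> 1" by (rule rho_le) (rule nule)
    show "1 \<le> \<rho> (Ult I)" using rho_ge[of UNIV "Ult I"] nu1 unfolding hat_def by auto
  qed
  have cap: "normalized_capacity (Ult I) (Ult_borel I) \<rho>"
    unfolding normalized_capacity_def using rho_mono rho0 rho1 by blast
  have main: "choquet UNIV \<nu> x = choquet (Ult I) \<rho> (\<lambda>F. choquet UNIV (mu_uf F) x)"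
    if bx: "bounded (range x)" for x :: "nat \<Rightarrow> real"
  proof -
    obtain M where M: "\<And>s. \<bar>x s\<bar> \<le> M" using bx unfolding bounded_iff by auto
    have "choquet (Ult I) \<rho> (\<lambda>F. choquet UNIV (mu_uf F) x) = choquet (Ult I) \<rho> (Lx x)"
      by (rule choquet_cong) (simp add: choquet_uf[OF Ult_uf M])
    define \<Phi> where "\<Phi> t = \<nu> {s\<in>UNIV. t \<le> x s}" for t
    define \<Psi> where "\<Psi> t = \<rho> {F\<in>Ult I. t \<le> Lx x F}" for t
    have anti: "\<Phi> b \<le> \<Phi> a" if "a \<le> b" for a b unfolding \<Phi>_def
      by (rule numono) (use that in auto)
    have lo: "\<Phi> t \<le> \<Psi> t" for t unfolding \<Phi>_def \<Psi>_def
      by (rule rho_ge) (auto simp: hat_def intro: Lx_props(2)[OF Ult_uf M])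
    have hi: "\<Psi> t \<le> \<Phi> s" if "s < t" for s t
      unfolding \<Psi>_def
    proof (rule rho_le)
      fix A assume hA: "hat I A \<subseteq> {F\<in>Ult I. t \<le> Lx x F}"
      let ?X = "{s\<in>UNIV. s \<le> x s}"
      have "A - {r. s \<le> x r} \<in> I"
      proof (rule ccontr)
        assume "A - {r. s \<le> x r} \<notin> I"
        then obtain F where F: "F \<in> Ult I" "A - {r. s \<le> x r} \<in> F" using ultra_exists[OF I] by blast
        have uf: "is_ultrafilter F" using Ult_uf[OF F(1)] .
        have "A \<in> F" using uf_up[OF uf F(2)] by blast
        then have "t \<le> Lx x F" using hA F(1) unfolding hat_def by blast
        then have "{r. s \<le> x r} \<in> F" using Lx_props(1)[OF uf M, of s] that by simp
        then have "(A - {r. s \<le> x r}) \<inter> {r. s \<le> x r} \<in> F" using uf_int[OF uf F(2)] by blast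
        moreover have "(A - {r. s \<le> x r}) \<inter> {r. s \<le> x r} = {}" by blast
        ultimately show False using uf_empty[OF uf] by simp
      qed
      moreover have "(A - (A \<inter> {r. s \<le> x r})) \<union> ((A \<inter> {r. s \<le> x r}) - A) = A - {r. s \<le> x r}" by blast
      ultimately have "\<nu> A = \<nu> (A \<inter> {r. s \<le> x r})" by (intro inv') simp
      also have "\<dots> \<le> \<Phi> s" unfolding \<Phi>_def by (rule numono) auto
      finally show "\<nu> A \<le> \<Phi> s" .
    qed
    obtain D where D: "negligible D" "\<And>t. t \<notin> D \<Longrightarrow> \<Psi> t = \<Phi> t"
      using spike_eq[of \<Phi> \<Psi>, OF anti lo hi] by blast
    have e1: "integral {0..} \<Phi> = integral {0..} \<Psi>"
      by (rule integral_spike[OF D(1)]) (use D(2) in auto)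
    have e2: "integral {..0} (\<lambda>t. \<Phi> t - 1) = integral {..0} (\<lambda>t. \<Psi> t - 1)"
      by (rule integral_spike[OF D(1)]) (use D(2) in auto)
    have "choquet UNIV \<nu> x = integral {0..} \<Phi> + integral {..0} (\<lambda>t. \<Phi> t - 1)"
      unfolding choquet_def \<Phi>_def nu1 by simp
    also have "\<dots> = integral {0..} \<Psi> + integral {..0} (\<lambda>t. \<Psi> t - 1)" using e1 e2 by simp
    also have "\<dots> = choquet (Ult I) \<rho> (Lx x)"
      unfolding choquet_def \<Psi>_def rho1 by simp
    finally show ?thesis using \<open>choquet (Ult I) \<rho> (\<lambda>F. choquet UNIV (mu_uf F) x) = choquet (Ult I) \<rho> (Lx x)\<close>
      by simp
  qed
  show ?thesis using cap main by blast
qed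


theorem theorem1p1:
  fixes \<nu> :: "nat set \<Rightarrow> real" and I :: "nat set set"
  assumes "normalized_capacity UNIV UNIV \<nu>"
    and "is_ideal I"
  shows "(invariant I \<nu> \<longleftrightarrow>
           (\<exists>\<rho>. normalized_capacity (Ult I) (Ult_borel I) \<rho> \<and>
              (\<forall>x::nat \<Rightarrow> real. bounded (range x) \<longrightarrow>
                 choquet UNIV \<nu> x =
                 choquet (Ult I) \<rho> (\<lambda>F. choquet UNIV (mu_uf F) x)))) \<and>
         (invariant I \<nu> \<longleftrightarrow>
           (\<exists>\<rho>. normalized_capacity (Ult I) (Ult_borel I) \<rho> \<and>
              (\<forall>A. \<nu> A = choquet (Ult I) \<rho> (\<lambda>F. mu_uf F A))))"
proof (intro conjI iffI)
  assume "invariant I \<nu>"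
  then show "\<exists>\<rho>. normalized_capacity (Ult I) (Ult_borel I) \<rho> \<and>
              (\<forall>x::nat \<Rightarrow> real. bounded (range x) \<longrightarrow>
                 choquet UNIV \<nu> x =
                 choquet (Ult I) \<rho> (\<lambda>F. choquet UNIV (mu_uf F) x))"
    using i_to_ii[OF assms] by blast
next
  assume "\<exists>\<rho>. normalized_capacity (Ult I) (Ult_borel I) \<rho> \<and>
              (\<forall>x::nat \<Rightarrow> real. bounded (range x) \<longrightarrow>
                 choquet UNIV \<nu> x =
                 choquet (Ult I) \<rho> (\<lambda>F. choquet UNIV (mu_uf F) x))"
  then obtain \<rho> where r: "normalized_capacity (Ult I) (Ult_borel I) \<rho>"
    "\<forall>x::nat \<Rightarrow> real. bounded (range x) \<longrightarrow>
                 choquet UNIV \<nu> x = choquet (Ult I) \<rho> (\<lambda>F. choquet UNIV (mu_uf F) x)" by blast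
  show "invariant I \<nu>" by (rule iii_to_i[OF r(1) ii_to_iii[OF assms(1) r(1) r(2)]])
next
  assume "invariant I \<nu>"
  then obtain \<rho> where r: "normalized_capacity (Ult I) (Ult_borel I) \<rho>"
    "\<forall>x::nat \<Rightarrow> real. bounded (range x) \<longrightarrow>
                 choquet UNIV \<nu> x = choquet (Ult I) \<rho> (\<lambda>F. choquet UNIV (mu_uf F) x)"
    using i_to_ii[OF assms] by blast
  show "\<exists>\<rho>. normalized_capacity (Ult I) (Ult_borel I) \<rho> \<and>
              (\<forall>A. \<nu> A = choquet (Ult I) \<rho> (\<lambda>F. mu_uf F A))"
    using r(1) ii_to_iii[OF assms(1) r(1) r(2)] by blast
next
  assume "\<exists>\<rho>. normalized_capacity (Ult I) (Ult_borel I) \<rho> \<and>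
              (\<forall>A. \<nu> A = choquet (Ult I) \<rho> (\<lambda>F. mu_uf F A))"
  then show "invariant I \<nu>" using iii_to_i by blast
qed

end
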